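(* Let $\Lambda\subset\mathbb{D}$ be discrete and $f:\mathbb{D}\setminus\Lambda\to\mathbb{C}$. (1) Let $w_1,\dots,w_k\in\mathbb{D}$ (not necessarily distinct, and possibly meeting $\Lambda$), and let $g$ be defined on $(\mathbb{D}\setminus\Lambda)\cup\{w_1,\dots,w_k\}$ with $g=f$ on $\mathbb{D}\setminus\Lambda$. Then for every $n\ge1$, $$\mathbf{k}_n(f)\le\mathbf{k}_n(g)\le\max_{0\le r\le\min\{k,n\}}\{\mathbf{k}_{n-r}(f)+r\}\le\mathbf{k}_n(f)+k.$$ (2) If $g$ is defined on $\mathbb{D}\setminus\Lambda$ and $g(z)=f(z)$ for all $z\in\mathbb{D}\setminus\Lambda$ except at $k$ distinct points $z_1,\dots,z_k\in\mathbb{D}\setminus\Lambda$, then $\mathbf{k}_n(g)\le\mathbf{k}_n(f)+k$ for every $n\ge1$.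
   Context: $\mathbb{D}$ is the open unit disk; a set $\Lambda\subset\mathbb{D}$ is discrete if it is at most countable with accumulation points only on the unit circle. Pick matrix: $P_n(f;z_1,\dots,z_n)=\left[\frac{1-f(z_i)\overline{f(z_j)}}{1-z_i\overline{z_j}}\right]_{i,j=1}^n$ for distinct $z_i\in\mathrm{Dom}(f)$. $\mathrm{sq}_-P$ = number of negative eigenvalues (with multiplicity) of a Hermitian $P$. $\mathbf{k}_n(f)=\max\mathrm{sq}_-P_n(f;z_1,\dots,z_n)$ over distinct $z_1,\dots,z_n\in\mathrm{Dom}(f)$, and $\mathbf{k}_0(f)=0$. *)

theory Defs
  imports "HOL-Analysis.Analysis" "Jordan_Normal_Form.Char_Poly"
begin

definition disk_discrete :: "complex set \<Rightarrow> bool" where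
  "disk_discrete L \<longleftrightarrow> L \<subseteq> ball 0 1 \<and> countable L \<and> (\<forall>z\<in>ball 0 1. \<not> z islimpt L)"

definition pick_matrix :: "(complex \<Rightarrow> complex) \<Rightarrow> complex list \<Rightarrow> complex mat" where
  "pick_matrix f zs = mat (length zs) (length zs)
     (\<lambda>(i,j). (1 - f (zs ! i) * cnj (f (zs ! j))) / (1 - zs ! i * cnj (zs ! j)))"

text \<open>Number of negative eigenvalues counted with (algebraic) multiplicity;
  for Hermitian matrices all eigenvalues are real.\<close>
definition sq_minus :: "complex mat \<Rightarrow> nat" where
  "sq_minus A = (\<Sum>r\<in>{r::real. r < 0 \<and> poly (char_poly A) (complex_of_real r) = 0}.
                    order (complex_of_real r) (char_poly A))"

definition kappa :: "complex set \<Rightarrow> (complex \<Rightarrow> complex) \<Rightarrow> nat \<Rightarrow> nat" where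
  "kappa D f n = Sup {sq_minus (pick_matrix f zs) | zs. length zs = n \<and> distinct zs \<and> set zs \<subseteq> D}"

end

theory Submission
  imports Defs "Jordan_Normal_Form.Schur_Decomposition" "Jordan_Normal_Form.Spectral_Radius"
begin

lemma kernel_exists:
  fixes M :: "nat \<Rightarrow> 'r \<Rightarrow> complex"
  assumes "finite R" "finite I" "card R < card I"
  shows "\<exists>c. (\<exists>k\<in>I. c k \<noteq> 0) \<and> (\<forall>r\<in>R. (\<Sum>k\<in>I. c k * M k r) = 0)"
  using assms
proof (induction R arbitrary: I M rule: finite_induct)
  case empty
  then have "I \<noteq> {}" by auto
  then show ?case by (intro exI[of _ "\<lambda>_. 1"]) auto
next
  case (insert r0 R)
  show ?case
  proof (cases "\<forall>k\<in>I. M k r0 = 0")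
    case True
    from insert have "card R < card I" by simp
    from insert.IH[OF insert.prems(1) this, of M] obtain c where
      c: "\<exists>k\<in>I. c k \<noteq> 0" "\<forall>r\<in>R. (\<Sum>k\<in>I. c k * M k r) = 0" by blast
    show ?thesis using c True by (intro exI[of _ c]) auto
  next
    case False
    then obtain k0 where k0: "k0 \<in> I" "M k0 r0 \<noteq> 0" by blast
    define I' where "I' = I - {k0}"
    define m where "m = M k0 r0"
    define M' where "M' = (\<lambda>k r. M k r - M k r0 / m * M k0 r)"
    have fI': "finite I'" using insert.prems by (simp add: I'_def)
    have cI': "card R < card I'" using insert k0 by (simp add: I'_def)
    from insert.IH[OF fI' cI', of M'] obtain c' where
      c': "\<exists>k\<in>I'. c' k \<noteq> 0" "\<forall>r\<in>R. (\<Sum>k\<in>I'. c' k * M' k r) = 0" by blast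
    define s where "s = (\<Sum>k\<in>I'. c' k * M k r0)"
    define c where "c = c'(k0 := - s / m)"
    have m0: "m \<noteq> 0" using k0 by (simp add: m_def)
    have split: "(\<Sum>k\<in>I. c k * M k r) = c k0 * M k0 r + (\<Sum>k\<in>I'. c' k * M k r)" for r
    proof -
      have "(\<Sum>k\<in>I. c k * M k r) = c k0 * M k0 r + (\<Sum>k\<in>I'. c k * M k r)"
        unfolding I'_def using insert.prems(1) k0(1) by (simp add: sum.remove)
      also have "(\<Sum>k\<in>I'. c k * M k r) = (\<Sum>k\<in>I'. c' k * M k r)"
        by (rule sum.cong) (auto simp: c_def I'_def)
      finally show ?thesis .
    qed
    have "\<forall>r\<in>insert r0 R. (\<Sum>k\<in>I. c k * M k r) = 0"
    proof
      fix r assume r: "r \<in> insert r0 R"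
      show "(\<Sum>k\<in>I. c k * M k r) = 0"
      proof (cases "r = r0")
        case True
        then show ?thesis using split[of r0] m0 by (simp add: c_def s_def m_def[symmetric])
      next
        case False
        with r have "r \<in> R" by auto
        with c' have "(\<Sum>k\<in>I'. c' k * M' k r) = 0" by auto
        moreover have "(\<Sum>k\<in>I'. c' k * M' k r) = (\<Sum>k\<in>I'. c' k * M k r) - s / m * M k0 r"
          unfolding M'_def s_def by (simp add: algebra_simps sum_subtractf sum_distrib_left sum_divide_distrib)
        ultimately have "(\<Sum>k\<in>I'. c' k * M k r) = s / m * M k0 r" by simp
        then show ?thesis using split[of r] by (simp add: c_def)
      qed
    qed
    moreover have "\<exists>k\<in>I. c k \<noteq> 0" using c' by (auto simp: c_def I'_def)
    ultimately show ?thesis by blast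
  qed
qed

definition Kf :: "(complex \<Rightarrow> complex) \<Rightarrow> complex \<Rightarrow> complex \<Rightarrow> complex" where
  "Kf h z w = (1 - h z * cnj (h w)) / (1 - z * cnj w)"

definition qf :: "(complex \<Rightarrow> complex) \<Rightarrow> complex set \<Rightarrow> (complex \<Rightarrow> complex) \<Rightarrow> complex" where
  "qf h S y = (\<Sum>z\<in>S. \<Sum>w\<in>S. cnj (y z) * Kf h z w * y w)"

definition negp :: "(complex \<Rightarrow> complex) \<Rightarrow> complex set \<Rightarrow> nat \<Rightarrow> bool" where
  "negp h S p \<longleftrightarrow> (\<exists>(I::nat set) (X::nat \<Rightarrow> complex \<Rightarrow> complex). finite I \<and> card I = p \<and>
      (\<forall>c. (\<exists>k\<in>I. c k \<noteq> 0) \<longrightarrow> Re (qf h S (\<lambda>z. \<Sum>k\<in>I. c k * X k z)) < 0))"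

lemma negpI:
  fixes I :: "nat set" and X :: "nat \<Rightarrow> complex \<Rightarrow> complex"
  assumes "finite I" "card I = p"
    "\<And>c. (\<exists>k\<in>I. c k \<noteq> 0) \<Longrightarrow> Re (qf h S (\<lambda>z. \<Sum>k\<in>I. c k * X k z)) < 0"
  shows "negp h S p"
  unfolding negp_def using assms by (intro exI[of _ I] exI[of _ X]) auto

lemma negpE:
  assumes "negp h S p"
  obtains I :: "nat set" and X :: "nat \<Rightarrow> complex \<Rightarrow> complex" where "finite I" "card I = p"
    "\<And>c. (\<exists>k\<in>I. c k \<noteq> 0) \<Longrightarrow> Re (qf h S (\<lambda>z. \<Sum>k\<in>I. c k * X k z)) < 0"
proof -
  from assms obtain I :: "nat set" and X :: "nat \<Rightarrow> complex \<Rightarrow> complex" where "finite I \<and> card I = p \<and>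
      (\<forall>c. (\<exists>k\<in>I. c k \<noteq> 0) \<longrightarrow> Re (qf h S (\<lambda>z. \<Sum>k\<in>I. c k * X k z)) < 0)"
    unfolding negp_def by (elim exE)
  then show ?thesis using that by blast
qed

lemma qf_cong: "(\<And>z. z \<in> S \<Longrightarrow> y z = y' z) \<Longrightarrow> qf h S y = qf h S y'"
  unfolding qf_def by (intro sum.cong refl) auto

lemma qf_restrict:
  assumes "finite S" "T \<subseteq> S" "\<And>z. z \<in> S - T \<Longrightarrow> y z = 0"
  shows "qf h S y = qf h T y"
proof -
  have "qf h S y = (\<Sum>z\<in>S. \<Sum>w\<in>T. cnj (y z) * Kf h z w * y w)"
    unfolding qf_def
  proof (rule sum.cong[OF refl])
    fix z assume "z \<in> S"
    show "(\<Sum>w\<in>S. cnj (y z) * Kf h z w * y w) = (\<Sum>w\<in>T. cnj (y z) * Kf h z w * y w)"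
      by (rule sum.mono_neutral_right) (use assms in auto)
  qed
  also have "\<dots> = (\<Sum>z\<in>T. \<Sum>w\<in>T. cnj (y z) * Kf h z w * y w)"
    by (rule sum.mono_neutral_right) (use assms in auto)
  finally show ?thesis unfolding qf_def .
qed

lemma negp_le:
  assumes "negp h S p" "p' \<le> p"
  shows "negp h S p'"
proof -
  obtain I :: "nat set" and X :: "nat \<Rightarrow> complex \<Rightarrow> complex" where I: "finite I" "card I = p"
    and neg: "\<And>c. (\<exists>k\<in>I. c k \<noteq> 0) \<Longrightarrow> Re (qf h S (\<lambda>z. \<Sum>k\<in>I. c k * X k z)) < 0"
    using assms(1) by (rule negpE) blast
  obtain I' where I': "I' \<subseteq> I" "card I' = p'" "finite I'"
    using obtain_subset_with_card_n[of p' I] assms(2) I by auto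
  have "\<forall>c. (\<exists>k\<in>I'. c k \<noteq> 0) \<longrightarrow> Re (qf h S (\<lambda>z. \<Sum>k\<in>I'. c k * X k z)) < 0"
  proof (intro allI impI)
    fix c :: "nat \<Rightarrow> complex" assume c: "\<exists>k\<in>I'. c k \<noteq> 0"
    define c0 where "c0 = (\<lambda>k. if k \<in> I' then c k else 0)"
    have "(\<lambda>z. \<Sum>k\<in>I. c0 k * X k z) = (\<lambda>z. \<Sum>k\<in>I'. c k * X k z)"
    proof
      fix z
      show "(\<Sum>k\<in>I. c0 k * X k z) = (\<Sum>k\<in>I'. c k * X k z)"
        by (rule sum.mono_neutral_cong_right) (use I I' in \<open>auto simp: c0_def\<close>)
    qed
    moreover have "\<exists>k\<in>I. c0 k \<noteq> 0" using c I' by (auto simp: c0_def)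
    ultimately show "Re (qf h S (\<lambda>z. \<Sum>k\<in>I'. c k * X k z)) < 0" using neg[of c0] by simp
  qed
  then show ?thesis using I' by (intro negpI[where I=I' and X=X]) auto
qed

lemma negp_mono:
  assumes "finite S" "T \<subseteq> S" "negp h T p"
  shows "negp h S p"
proof -
  obtain I :: "nat set" and X :: "nat \<Rightarrow> complex \<Rightarrow> complex" where I: "finite I" "card I = p"
    and neg: "\<And>c. (\<exists>k\<in>I. c k \<noteq> 0) \<Longrightarrow> Re (qf h T (\<lambda>z. \<Sum>k\<in>I. c k * X k z)) < 0"
    using assms(3) by (rule negpE) blast
  define X' where "X' = (\<lambda>k z. if z \<in> T then X k z else 0)"
  have "\<forall>c. (\<exists>k\<in>I. c k \<noteq> 0) \<longrightarrow> Re (qf h S (\<lambda>z. \<Sum>k\<in>I. c k * X' k z)) < 0"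
  proof (intro allI impI)
    fix c :: "nat \<Rightarrow> complex" assume c: "\<exists>k\<in>I. c k \<noteq> 0"
    have "qf h S (\<lambda>z. \<Sum>k\<in>I. c k * X' k z) = qf h T (\<lambda>z. \<Sum>k\<in>I. c k * X' k z)"
      by (rule qf_restrict) (use assms in \<open>auto simp: X'_def\<close>)
    also have "\<dots> = qf h T (\<lambda>z. \<Sum>k\<in>I. c k * X k z)"
      by (rule qf_cong) (auto simp: X'_def)
    finally show "Re (qf h S (\<lambda>z. \<Sum>k\<in>I. c k * X' k z)) < 0" using neg[OF c] by simp
  qed
  then show ?thesis using I by (intro negpI[where I=I and X=X']) auto
qed

lemma negp_drop:
  assumes "finite S" "z0 \<in> S" "negp h S p"
  shows "negp h (S - {z0}) (p - 1)"
proof -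
  obtain I :: "nat set" and X :: "nat \<Rightarrow> complex \<Rightarrow> complex" where I: "finite I" "card I = p"
    and neg: "\<And>c. (\<exists>k\<in>I. c k \<noteq> 0) \<Longrightarrow> Re (qf h S (\<lambda>z. \<Sum>k\<in>I. c k * X k z)) < 0"
    using assms(3) by (rule negpE) blast
  have fS: "finite S" by fact
  show ?thesis
  proof (cases "\<forall>k\<in>I. X k z0 = 0")
    case True
    have "\<forall>c. (\<exists>k\<in>I. c k \<noteq> 0) \<longrightarrow> Re (qf h (S - {z0}) (\<lambda>z. \<Sum>k\<in>I. c k * X k z)) < 0"
    proof (intro allI impI)
      fix c :: "nat \<Rightarrow> complex" assume c: "\<exists>k\<in>I. c k \<noteq> 0"
      have "qf h S (\<lambda>z. \<Sum>k\<in>I. c k * X k z) = qf h (S - {z0}) (\<lambda>z. \<Sum>k\<in>I. c k * X k z)"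
        by (rule qf_restrict) (use assms True in auto)
      then show "Re (qf h (S - {z0}) (\<lambda>z. \<Sum>k\<in>I. c k * X k z)) < 0" using neg[OF c] by simp
    qed
    then have "negp h (S - {z0}) p" using I by (intro negpI[where I=I and X=X]) auto
    then show ?thesis by (rule negp_le) simp
  next
    case False
    then obtain k0 where k0: "k0 \<in> I" "X k0 z0 \<noteq> 0" by blast
    define m where "m = X k0 z0"
    define I' where "I' = I - {k0}"
    define X' where "X' = (\<lambda>k z. X k z - X k z0 / m * X k0 z)"
    have I': "finite I'" "card I' = p - 1" using I k0 by (auto simp: I'_def)
    have m0: "m \<noteq> 0" using k0 by (simp add: m_def)
    have "\<forall>c. (\<exists>k\<in>I'. c k \<noteq> 0) \<longrightarrow> Re (qf h (S - {z0}) (\<lambda>z. \<Sum>k\<in>I'. c k * X' k z)) < 0"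
    proof (intro allI impI)
      fix c' :: "nat \<Rightarrow> complex" assume c': "\<exists>k\<in>I'. c' k \<noteq> 0"
      define s where "s = (\<Sum>k\<in>I'. c' k * X k z0)"
      define c where "c = c'(k0 := - s / m)"
      have eq: "(\<Sum>k\<in>I'. c' k * X' k z) = (\<Sum>k\<in>I. c k * X k z)" for z
      proof -
        have "(\<Sum>k\<in>I. c k * X k z) = c k0 * X k0 z + (\<Sum>k\<in>I'. c k * X k z)"
          unfolding I'_def using I(1) k0(1) by (simp add: sum.remove)
        also have "(\<Sum>k\<in>I'. c k * X k z) = (\<Sum>k\<in>I'. c' k * X k z)"
          by (rule sum.cong) (auto simp: c_def I'_def)
        also have "(\<Sum>k\<in>I'. c' k * X' k z) = (\<Sum>k\<in>I'. c' k * X k z) - s / m * X k0 z"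
          unfolding X'_def s_def by (simp add: algebra_simps sum_subtractf sum_distrib_left sum_divide_distrib)
        ultimately show ?thesis by (simp add: c_def)
      qed
      have z0: "(\<Sum>k\<in>I'. c' k * X' k z0) = 0"
        unfolding X'_def m_def using k0 by simp
      have cnz: "\<exists>k\<in>I. c k \<noteq> 0" using c' by (auto simp: c_def I'_def)
      have "qf h S (\<lambda>z. \<Sum>k\<in>I'. c' k * X' k z) = qf h (S - {z0}) (\<lambda>z. \<Sum>k\<in>I'. c' k * X' k z)"
        by (rule qf_restrict) (use assms z0 in auto)
      moreover have "(\<lambda>z. \<Sum>k\<in>I'. c' k * X' k z) = (\<lambda>z. \<Sum>k\<in>I. c k * X k z)"
        using eq by auto
      ultimately show "Re (qf h (S - {z0}) (\<lambda>z. \<Sum>k\<in>I'. c' k * X' k z)) < 0"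
        using neg[OF cnz] by simp
    qed
    then show ?thesis using I' by (intro negpI[where I=I' and X=X']) auto
  qed
qed

lemma negp_drop_set:
  assumes "finite S" "T \<subseteq> S" "negp h S p"
  shows "negp h T (p - card (S - T))"
  using assms
proof (induction "card (S - T)" arbitrary: S p)
  case 0
  then have "S = T" by (auto simp: card_eq_0_iff)
  then show ?case using 0 by simp
next
  case (Suc n)
  have "S - T \<noteq> {}" using Suc.hyps(2) by (metis card.empty nat.distinct(1))
  then obtain z0 where z0: "z0 \<in> S - T" by blast
  have neg: "negp h (S - {z0}) (p - 1)" using negp_drop[OF Suc.prems(1) _ Suc.prems(3)] z0 by auto
  have eqs: "S - {z0} - T = (S - T) - {z0}" by blast
  have cn: "n = card (S - {z0} - T)" unfolding eqs using Suc.hyps(2) z0 Suc.prems(1)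
    by (simp add: card_Diff_singleton)
  have fS': "finite (S - {z0})" using Suc.prems(1) by simp
  have TS': "T \<subseteq> S - {z0}" using Suc.prems(2) z0 by blast
  have "negp h T (p - 1 - card (S - {z0} - T))"
    by (rule Suc.hyps(1)[OF cn fS' TS' neg])
  then have "negp h T (p - 1 - n)" unfolding cn[symmetric] .
  moreover have "p - 1 - n = p - card (S - T)" using Suc.hyps(2)[symmetric] by simp
  ultimately show ?case by simp
qed

lemma sum_cnj_self: "(\<Sum>j\<in>A. x j * cnj (x j)) = complex_of_real (\<Sum>j\<in>A. (cmod (x j))\<^sup>2)"
  unfolding of_real_sum by (rule sum.cong) (auto simp: complex_norm_square simp del: of_real_power)

lemma onb_exists:
  fixes v :: "complex vec"
  assumes v: "v \<in> carrier_vec n" and v0: "v \<noteq> 0\<^sub>v n"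
  shows "\<exists>W \<alpha>. (\<forall>i<n. \<forall>k<n. (\<Sum>j<n. cnj (W j i) * W j k) = (if i = k then 1 else 0))
     \<and> (\<forall>j<n. W j 0 = \<alpha> * v$j)"
proof -
  interpret cof_vec_space n "TYPE(complex)" .
  define b where "b = basis_completion v"
  from basis_completion[OF v v0, folded b_def] have
    b: "set b \<subseteq> carrier_vec n" and dist: "distinct b" and indep: "\<not> lin_dep (set b)"
    and lenb: "length b = n" and hdb: "hd b = v" by auto
  define ws where "ws = gram_schmidt n b"
  from gram_schmidt_result[OF b dist indep refl, folded ws_def] have
    ws: "set ws \<subseteq> carrier_vec n" "corthogonal ws" "length ws = n" by (auto simp: lenb)
  have n0: "n \<noteq> 0"
  proof
    assume "n = 0"
    then have "v = 0\<^sub>v n" using v by (intro eq_vecI) auto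
    then show False using v0 by simp
  qed
  then obtain vs where bv: "b = v # vs" using hdb lenb by (cases b) auto
  have hdws: "hd ws = v" using gram_schmidt_hd[OF v, of vs] bv ws_def by simp
  have ws0: "ws ! 0 = v" using hdws ws(3) n0 by (cases ws) auto
  have wsc: "ws ! i \<in> carrier_vec n" if "i < n" for i using ws that by auto
  define N where "N i = (\<Sum>j<n. (cmod ((ws!i) $ j))\<^sup>2)" for i
  have cs: "ws ! k \<bullet>c ws ! i = (\<Sum>j<n. (ws!k)$j * cnj ((ws!i)$j))" if "i < n" for i k
    using wsc[OF that] by (simp add: scalar_prod_def conjugate_vec_def lessThan_atLeast0)
  have Nc: "ws ! i \<bullet>c ws ! i = complex_of_real (N i)" if "i < n" for i
    unfolding cs[OF that] N_def by (rule sum_cnj_self)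
  have Npos: "N i > 0" if "i < n" for i
  proof -
    have "ws ! i \<bullet>c ws ! i \<noteq> 0" using corthogonalD[OF ws(2), of i i] ws(3) that by auto
    then have "N i \<noteq> 0" using Nc[OF that] by auto
    moreover have "N i \<ge> 0" unfolding N_def by (intro sum_nonneg) auto
    ultimately show ?thesis by simp
  qed
  define W where "W j i = (ws!i) $ j / complex_of_real (sqrt (N i))" for j i
  have "(\<Sum>j<n. cnj (W j i) * W j k) = (if i = k then 1 else 0)" if i: "i < n" and k: "k < n" for i k
  proof -
    have "(\<Sum>j<n. cnj (W j i) * W j k) = (\<Sum>j<n. (ws!k)$j * cnj ((ws!i)$j)) / (complex_of_real (sqrt (N i)) * complex_of_real (sqrt (N k)))"
      unfolding W_def by (simp add: sum_divide_distrib mult.commute)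
    also have "(\<Sum>j<n. (ws!k)$j * cnj ((ws!i)$j)) = ws ! k \<bullet>c ws ! i" using cs[OF i] by simp
    finally have eq: "(\<Sum>j<n. cnj (W j i) * W j k) = ws ! k \<bullet>c ws ! i / (complex_of_real (sqrt (N i)) * complex_of_real (sqrt (N k)))" .
    show ?thesis
    proof (cases "i = k")
      case True
      have "complex_of_real (sqrt (N i)) * complex_of_real (sqrt (N i)) = complex_of_real (N i)"
        using Npos[OF i] by (simp flip: of_real_mult)
      then show ?thesis using eq True Nc[OF i] Npos[OF i] by simp
    next
      case False
      then have "ws ! k \<bullet>c ws ! i = 0" using corthogonalD[OF ws(2), of k i] ws(3) i k by auto
      then show ?thesis using eq False by simp
    qed
  qed
  moreover have "\<forall>j<n. W j 0 = (1 / complex_of_real (sqrt (N 0))) * v$j"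
    unfolding W_def ws0 by simp
  ultimately show ?thesis by blast
qed

definition cadj :: "complex mat \<Rightarrow> complex mat" where
  "cadj M = mat (dim_col M) (dim_row M) (\<lambda>(i,j). cnj (M $$ (j,i)))"

definition dmat :: "nat \<Rightarrow> (nat \<Rightarrow> real) \<Rightarrow> complex mat" where
  "dmat n d = mat n n (\<lambda>(i,j). if i = j then complex_of_real (d i) else 0)"

lemma cadj_carrier[simp]: "M \<in> carrier_mat a b \<Longrightarrow> cadj M \<in> carrier_mat b a"
  unfolding cadj_def by auto

lemma cadj_index[simp]: "i < dim_col M \<Longrightarrow> j < dim_row M \<Longrightarrow> cadj M $$ (i,j) = cnj (M $$ (j,i))"
  "dim_row (cadj M) = dim_col M" "dim_col (cadj M) = dim_row M"
  unfolding cadj_def by auto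

lemma dmat_carrier[simp]: "dmat n d \<in> carrier_mat n n"
  unfolding dmat_def by auto

lemma dmat_index[simp]: "i < n \<Longrightarrow> j < n \<Longrightarrow> dmat n d $$ (i,j) = (if i = j then complex_of_real (d i) else 0)"
  "dim_row (dmat n d) = n" "dim_col (dmat n d) = n"
  unfolding dmat_def by auto

lemma prod_entry:
  assumes "A \<in> carrier_mat a b" "B \<in> carrier_mat b c" "i < a" "j < c"
  shows "(A * B) $$ (i,j) = (\<Sum>k<b. A $$ (i,k) * B $$ (k,j))"
  using assms by (auto simp: scalar_prod_def lessThan_atLeast0 intro!: sum.cong)

lemma cadj_mult:
  assumes "M \<in> carrier_mat a b" "N \<in> carrier_mat b c"
  shows "cadj (M * N) = cadj N * cadj M"
proof (rule eq_matI)
  fix i j assume "i < dim_row (cadj N * cadj M)" "j < dim_col (cadj N * cadj M)"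
  then have ij: "i < c" "j < a" using assms by auto
  have "cadj (M * N) $$ (i,j) = cnj ((M * N) $$ (j,i))" using ij assms by simp
  also have "\<dots> = (\<Sum>k<b. cnj (M $$ (j,k)) * cnj (N $$ (k,i)))"
    using prod_entry[OF assms ij(2) ij(1)] by simp
  also have "\<dots> = (\<Sum>k<b. cadj N $$ (i,k) * cadj M $$ (k,j))"
    using assms ij by (intro sum.cong) auto
  also have "\<dots> = (cadj N * cadj M) $$ (i,j)"
    using prod_entry[of "cadj N" c b "cadj M" a i j] assms ij by simp
  finally show "cadj (M * N) $$ (i,j) = (cadj N * cadj M) $$ (i,j)" .
qed (use assms in auto)

lemma cadj_cadj[simp]: "cadj (cadj M) = M"
  by (rule eq_matI) auto

lemma dmat_right:
  assumes "M \<in> carrier_mat a n" "i < a" "k < n"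
  shows "(M * dmat n d) $$ (i,k) = M $$ (i,k) * complex_of_real (d k)"
proof -
  have "(M * dmat n d) $$ (i,k) = (\<Sum>j<n. M $$ (i,j) * dmat n d $$ (j,k))"
    using prod_entry[OF assms(1) dmat_carrier assms(2,3)] .
  also have "\<dots> = (\<Sum>j<n. if j = k then M $$ (i,j) * complex_of_real (d k) else 0)"
    using assms by (intro sum.cong) auto
  also have "\<dots> = M $$ (i,k) * complex_of_real (d k)" using assms(3) by simp
  finally show ?thesis .
qed

lemma sandwich_entry:
  assumes "M \<in> carrier_mat a n" "i < a" "j < a"
  shows "(M * dmat n d * cadj M) $$ (i,j) = (\<Sum>k<n. M $$ (i,k) * complex_of_real (d k) * cnj (M $$ (j,k)))"
proof -
  have c: "M * dmat n d \<in> carrier_mat a n" using assms by auto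
  have "(M * dmat n d * cadj M) $$ (i,j) = (\<Sum>k<n. (M * dmat n d) $$ (i,k) * cadj M $$ (k,j))"
    using prod_entry[OF c cadj_carrier[OF assms(1)] assms(2,3)] .
  also have "\<dots> = (\<Sum>k<n. M $$ (i,k) * complex_of_real (d k) * cnj (M $$ (j,k)))"
  proof (rule sum.cong[OF refl])
    fix k assume "k \<in> {..<n}"
    then have k: "k < n" by simp
    show "(M * dmat n d) $$ (i,k) * cadj M $$ (k,j) = M $$ (i,k) * complex_of_real (d k) * cnj (M $$ (j,k))"
      unfolding dmat_right[OF assms(1) assms(2) k] using assms k by simp
  qed
  finally show ?thesis .
qed

lemma unitary_right:
  assumes "U \<in> carrier_mat n n" "cadj U * U = 1\<^sub>m n"
  shows "U * cadj U = 1\<^sub>m n"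
  using mat_mult_left_right_inverse[OF cadj_carrier[OF assms(1)] assms(1) assms(2)] .

lemma spectral:
  fixes A :: "complex mat"
  assumes "A \<in> carrier_mat n n" "cadj A = A"
  shows "\<exists>U d. U \<in> carrier_mat n n \<and> cadj U * U = 1\<^sub>m n \<and> A = U * dmat n d * cadj U"
  using assms
proof (induction n arbitrary: A)
  case 0
  show ?case
    by (intro exI[of _ "1\<^sub>m 0"] exI[of _ "\<lambda>_. 0"]) (use 0 in \<open>auto intro!: eq_matI\<close>)
next
  case (Suc m A)
  define n where "n = Suc m"
  have A: "A \<in> carrier_mat n n" and herm: "cadj A = A" using Suc.prems by (auto simp: n_def)
  have "spectrum A \<noteq> {}" using spectrum_non_empty[OF A] by (simp add: n_def)
  then obtain e where "eigenvalue A e" unfolding spectrum_def by auto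
  then obtain v where "eigenvector A v e" unfolding eigenvalue_def by auto
  then have v: "v \<in> carrier_vec n" and v0: "v \<noteq> 0\<^sub>v n" and Av: "A *\<^sub>v v = e \<cdot>\<^sub>v v"
    using A unfolding eigenvector_def by auto
  obtain W \<alpha> where Wo: "\<forall>i<n. \<forall>k<n. (\<Sum>j<n. cnj (W j i) * W j k) = (if i = k then 1 else 0)"
    and W0: "\<forall>j<n. W j 0 = \<alpha> * v$j"
    using onb_exists[OF v v0] by blast
  define Wm where "Wm = mat n n (\<lambda>(j,i). W j i)"
  have WmC: "Wm \<in> carrier_mat n n" unfolding Wm_def by simp
  have Wm_idx: "Wm $$ (j,i) = W j i" if "j < n" "i < n" for j i using that by (simp add: Wm_def)
  have WW: "cadj Wm * Wm = 1\<^sub>m n"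
  proof (rule eq_matI)
    fix i k assume "i < dim_row (1\<^sub>m n)" "k < dim_col (1\<^sub>m n)"
    then have ik: "i < n" "k < n" by auto
    have "(cadj Wm * Wm) $$ (i,k) = (\<Sum>j<n. cadj Wm $$ (i,j) * Wm $$ (j,k))"
      using prod_entry[OF cadj_carrier[OF WmC] WmC ik] .
    also have "\<dots> = (\<Sum>j<n. cnj (W j i) * W j k)"
      using ik by (intro sum.cong) (auto simp: Wm_def)
    finally show "(cadj Wm * Wm) $$ (i,k) = 1\<^sub>m n $$ (i,k)" using Wo ik by simp
  qed (use WmC in auto)
  have WW': "Wm * cadj Wm = 1\<^sub>m n" by (rule unitary_right[OF WmC WW])
  define A' where "A' = cadj Wm * A * Wm"
  have A'C: "A' \<in> carrier_mat n n" unfolding A'_def using WmC A by auto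
  have A'as: "A' = cadj Wm * (A * Wm)" unfolding A'_def
    using assoc_mult_mat[OF cadj_carrier[OF WmC] A WmC] .
  have A'herm: "cadj A' = A'"
  proof -
    have "cadj A' = cadj (A * Wm) * cadj (cadj Wm)"
      unfolding A'as by (rule cadj_mult[OF cadj_carrier[OF WmC]]) (use A WmC in auto)
    also have "\<dots> = (cadj Wm * cadj A) * Wm"
      by (simp add: cadj_mult[OF A WmC])
    also have "\<dots> = A'" unfolding A'_def herm ..
    finally show ?thesis .
  qed
  have AW0: "(A * Wm) $$ (j,0) = e * W j 0" if j: "j < n" for j
  proof -
    have n0: "0 < n" by (simp add: n_def)
    have "(A * Wm) $$ (j,0) = (\<Sum>l<n. A $$ (j,l) * Wm $$ (l,0))"
      using prod_entry[OF A WmC j n0] .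
    also have "\<dots> = \<alpha> * (\<Sum>l<n. A $$ (j,l) * v $ l)"
      unfolding sum_distrib_left using W0 n0 by (intro sum.cong) (auto simp: Wm_def)
    also have "(\<Sum>l<n. A $$ (j,l) * v $ l) = (A *\<^sub>v v) $ j"
      using A v j by (auto simp: scalar_prod_def lessThan_atLeast0 intro!: sum.cong)
    also have "\<dots> = e * v $ j" using Av v j by simp
    finally show ?thesis using W0 j by simp
  qed
  have A'0: "A' $$ (i,0) = (if i = 0 then e else 0)" if i: "i < n" for i
  proof -
    have n0: "0 < n" by (simp add: n_def)
    have "A' $$ (i,0) = (\<Sum>j<n. cadj Wm $$ (i,j) * (A * Wm) $$ (j,0))"
      unfolding A'as using prod_entry[OF cadj_carrier[OF WmC] _ i n0, of "A * Wm"] A WmC by auto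
    also have "\<dots> = e * (\<Sum>j<n. cnj (W j i) * W j 0)"
      unfolding sum_distrib_left using i WmC by (intro sum.cong) (auto simp: AW0 Wm_idx)
    finally show ?thesis using Wo i n0 by simp
  qed
  have n0: "0 < n" by (simp add: n_def)
  have "cnj (A' $$ (0,0)) = A' $$ (0,0)"
    using arg_cong[OF A'herm, of "\<lambda>M. M $$ (0,0)"] A'C n0 by simp
  then have "cnj e = e" using A'0[OF n0] by simp
  then have ereal: "complex_of_real (Re e) = e" by (simp add: complex_eq_iff)
  have A'r0: "A' $$ (0,k) = (if k = 0 then e else 0)" if k: "k < n" for k
  proof -
    have "A' $$ (0,k) = cnj (A' $$ (k,0))"
      using arg_cong[OF A'herm, of "\<lambda>M. M $$ (0,k)"] A'C n0 k by simp
    then show ?thesis using A'0[OF k] \<open>cnj e = e\<close> by simp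
  qed
  define A3 where "A3 = mat m m (\<lambda>(i,k). A' $$ (Suc i, Suc k))"
  have A3C: "A3 \<in> carrier_mat m m" unfolding A3_def by simp
  have A3herm: "cadj A3 = A3"
  proof (rule eq_matI)
    fix i k assume "i < dim_row A3" "k < dim_col A3"
    then have ik: "i < m" "k < m" using A3C by auto
    have "cnj (A' $$ (Suc k, Suc i)) = A' $$ (Suc i, Suc k)"
      using arg_cong[OF A'herm, of "\<lambda>M. M $$ (Suc i, Suc k)"] A'C ik by (simp add: n_def)
    then show "cadj A3 $$ (i,k) = A3 $$ (i,k)" using ik by (simp add: A3_def)
  qed (use A3C in auto)
  obtain U3 d3 where U3C: "U3 \<in> carrier_mat m m" and U3U: "cadj U3 * U3 = 1\<^sub>m m"
    and A3dec: "A3 = U3 * dmat m d3 * cadj U3"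
    using Suc.IH[OF A3C A3herm] by blast
  define B where "B = mat n n (\<lambda>(i,k). if i = 0 \<and> k = 0 then 1 else if i = 0 \<or> k = 0 then 0 else U3 $$ (i - 1, k - 1))"
  define d where "d = (\<lambda>i. if i = 0 then Re e else d3 (i - 1))"
  have BC: "B \<in> carrier_mat n n" unfolding B_def by simp
  have Bidx: "B $$ (i,k) = (if i = 0 \<and> k = 0 then 1 else if i = 0 \<or> k = 0 then 0 else U3 $$ (i - 1, k - 1))"
    if "i < n" "k < n" for i k using that by (simp add: B_def)
  have BB: "cadj B * B = 1\<^sub>m n"
  proof (rule eq_matI)
    fix i k assume "i < dim_row (1\<^sub>m n)" "k < dim_col (1\<^sub>m n)"
    then have ik: "i < n" "k < n" by auto
    have "(cadj B * B) $$ (i,k) = (\<Sum>j<n. cnj (B $$ (j,i)) * B $$ (j,k))"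
      using prod_entry[OF cadj_carrier[OF BC] BC ik] ik BC by (auto intro!: sum.cong)
    also have "\<dots> = cnj (B $$ (0,i)) * B $$ (0,k) + (\<Sum>j<m. cnj (B $$ (Suc j,i)) * B $$ (Suc j,k))"
      unfolding n_def sum.lessThan_Suc_shift ..
    finally have eq: "(cadj B * B) $$ (i,k) = cnj (B $$ (0,i)) * B $$ (0,k) + (\<Sum>j<m. cnj (B $$ (Suc j,i)) * B $$ (Suc j,k))" .
    show "(cadj B * B) $$ (i,k) = 1\<^sub>m n $$ (i,k)"
    proof (cases i)
      case 0
      then show ?thesis using eq ik by (cases k) (auto simp: Bidx n_def)
    next
      case (Suc i')
      show ?thesis
      proof (cases k)
        case 0
        then show ?thesis using eq ik Suc by (auto simp: Bidx n_def)
      next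
        case (Suc k')
        have ik': "i' < m" "k' < m" using ik \<open>i = Suc i'\<close> Suc by (auto simp: n_def)
        have "(\<Sum>j<m. cnj (B $$ (Suc j,i)) * B $$ (Suc j,k)) = (\<Sum>j<m. cadj U3 $$ (i',j) * U3 $$ (j,k'))"
          using ik' \<open>i = Suc i'\<close> Suc U3C by (intro sum.cong) (auto simp: Bidx n_def)
        also have "\<dots> = (cadj U3 * U3) $$ (i',k')"
          using prod_entry[OF cadj_carrier[OF U3C] U3C ik'] by simp
        finally show ?thesis using eq ik ik' \<open>i = Suc i'\<close> Suc U3U by (auto simp: Bidx n_def)
      qed
    qed
  qed (use BC in auto)
  have A'dec: "A' = B * dmat n d * cadj B"
  proof (rule eq_matI)
    fix a b assume "a < dim_row (B * dmat n d * cadj B)" "b < dim_col (B * dmat n d * cadj B)"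
    then have ab: "a < n" "b < n" using BC by auto
    have "(B * dmat n d * cadj B) $$ (a,b) = (\<Sum>k<n. B $$ (a,k) * complex_of_real (d k) * cnj (B $$ (b,k)))"
      by (rule sandwich_entry[OF BC ab])
    also have "\<dots> = B $$ (a,0) * complex_of_real (d 0) * cnj (B $$ (b,0)) +
        (\<Sum>k<m. B $$ (a,Suc k) * complex_of_real (d (Suc k)) * cnj (B $$ (b,Suc k)))"
      unfolding n_def sum.lessThan_Suc_shift ..
    finally have eq: "(B * dmat n d * cadj B) $$ (a,b) = B $$ (a,0) * complex_of_real (d 0) * cnj (B $$ (b,0)) +
        (\<Sum>k<m. B $$ (a,Suc k) * complex_of_real (d (Suc k)) * cnj (B $$ (b,Suc k)))" .
    show "A' $$ (a,b) = (B * dmat n d * cadj B) $$ (a,b)"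
    proof (cases a)
      case 0
      then show ?thesis using eq ab A'r0 ereal by (cases b) (auto simp: Bidx n_def d_def)
    next
      case (Suc a')
      show ?thesis
      proof (cases b)
        case 0
        then show ?thesis using eq ab Suc A'0 by (auto simp: Bidx n_def d_def)
      next
        case (Suc b')
        have ab': "a' < m" "b' < m" using ab \<open>a = Suc a'\<close> Suc by (auto simp: n_def)
        have "(\<Sum>k<m. B $$ (a,Suc k) * complex_of_real (d (Suc k)) * cnj (B $$ (b,Suc k)))
            = (\<Sum>k<m. U3 $$ (a',k) * complex_of_real (d3 k) * cnj (U3 $$ (b',k)))"
          using ab' \<open>a = Suc a'\<close> Suc by (intro sum.cong) (auto simp: Bidx n_def d_def)
        also have "\<dots> = A3 $$ (a',b')"
          unfolding A3dec using sandwich_entry[OF U3C ab'] by simp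
        also have "\<dots> = A' $$ (a,b)" using ab' \<open>a = Suc a'\<close> Suc by (simp add: A3_def)
        finally show ?thesis using eq ab ab' \<open>a = Suc a'\<close> Suc by (auto simp: Bidx n_def)
      qed
    qed
  qed (use A'C BC in auto)
  define U where "U = Wm * B"
  have UC: "U \<in> carrier_mat n n" unfolding U_def using WmC BC by auto
  have cU: "cadj U = cadj B * cadj Wm" unfolding U_def by (rule cadj_mult[OF WmC BC])
  have "cadj U * U = cadj B * cadj Wm * (Wm * B)"
    unfolding cU by (simp add: U_def)
  also have "\<dots> = cadj B * (cadj Wm * (Wm * B))"
    by (rule assoc_mult_mat[OF cadj_carrier[OF BC] cadj_carrier[OF WmC]]) (use WmC BC in auto)
  also have "cadj Wm * (Wm * B) = B"
    using assoc_mult_mat[OF cadj_carrier[OF WmC] WmC BC, symmetric] WW BC by simp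
  finally have UU: "cadj U * U = 1\<^sub>m n" using BB by simp
  have DC: "dmat n d \<in> carrier_mat n n" by simp
  have "A = (Wm * cadj Wm) * A * (Wm * cadj Wm)" using WW' A by simp
  also have "\<dots> = Wm * A' * cadj Wm"
    unfolding A'_def using WmC A
    by (simp add: assoc_mult_mat[of _ n n _ n _ n] mult_carrier_mat[of _ n n _ n])
  also have "\<dots> = Wm * (B * dmat n d * cadj B) * cadj Wm" unfolding A'dec ..
  also have "\<dots> = (Wm * B) * dmat n d * (cadj B * cadj Wm)"
    using WmC BC DC
    by (simp add: assoc_mult_mat[of _ n n _ n _ n] mult_carrier_mat[of _ n n _ n])
  also have "\<dots> = U * dmat n d * cadj U" unfolding cU by (simp only: U_def)
  finally have "A = U * dmat n d * cadj U" .
  then show ?case using UC UU unfolding n_def by blast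
qed

lemma order_linear_factor: "order x [:-a, 1:] = (if x = a then 1 else (0::nat))"
proof (cases "x = a")
  case True
  then show ?thesis using order_power_n_n[of a 1] by simp
next
  case False
  then have "poly [:-a, 1:] x \<noteq> 0" by simp
  then show ?thesis using False by (simp add: order_0I)
qed

lemma order_prod_linear:
  fixes a :: "nat \<Rightarrow> 'a::idom"
  shows "order x (\<Prod>i<n. [:- a i, 1:]) = card {i. i < n \<and> a i = x}"
proof (induction n)
  case 0
  then show ?case by (simp add: order_0I)
next
  case (Suc n)
  have p0: "(\<Prod>i<n. [:- a i, 1:]) \<noteq> 0"
    by (subst prod_zero_iff) auto
  have nz: "(\<Prod>i<n. [:- a i, 1:]) * [:- a n, 1:] \<noteq> 0"
    by (rule no_zero_divisors[OF p0]) simp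
  have o: "order x ((\<Prod>i<n. [:- a i, 1:]) * [:- a n, 1:]) = order x (\<Prod>i<n. [:- a i, 1:]) + order x [:- a n, 1:]"
    by (rule order_mult[OF nz])
  have set: "{i. i < Suc n \<and> a i = x} = {i. i < n \<and> a i = x} \<union> (if x = a n then {n} else {})"
    by (auto simp: less_Suc_eq)
  have c: "card {i. i < Suc n \<and> a i = x} = card {i. i < n \<and> a i = x} + (if x = a n then 1 else 0)"
    unfolding set by (auto simp: card_insert_if)
  have "order x (\<Prod>i<Suc n. [:- a i, 1:]) = card {i. i < n \<and> a i = x} + (if x = a n then 1 else 0)"
    unfolding prod.lessThan_Suc o Suc.IH order_linear_factor ..
  then show ?case unfolding c .
qed

lemma sq_minus_diag:
  fixes A :: "complex mat"
  assumes U: "U \<in> carrier_mat n n" and UU: "cadj U * U = 1\<^sub>m n" and Adec: "A = U * dmat n d * cadj U"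
  shows "sq_minus A = card {i. i < n \<and> d i < 0}"
proof -
  have DC: "dmat n d \<in> carrier_mat n n" by simp
  have AC: "A \<in> carrier_mat n n" unfolding Adec using U by auto
  have "similar_mat_wit A (dmat n d) U (cadj U)"
    unfolding similar_mat_wit_def Let_def using AC DC U UU unitary_right[OF U UU] Adec by auto
  then have "similar_mat A (dmat n d)" unfolding similar_mat_def by blast
  then have "char_poly A = char_poly (dmat n d)" by (rule char_poly_similar)
  also have "\<dots> = (\<Prod>a\<leftarrow>diag_mat (dmat n d). [:- a, 1:])"
    by (rule char_poly_upper_triangular[OF DC]) (auto simp: upper_triangular_def)
  also have "\<dots> = (\<Prod>i<n. [:- complex_of_real (d i), 1:])"
  proof -
    have dg: "diag_mat (dmat n d) = map (\<lambda>i. complex_of_real (d i)) [0..<n]"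
      unfolding diag_mat_def by (intro map_cong) auto
    show ?thesis unfolding dg map_map
      by (simp add: prod.distinct_set_conv_list[symmetric] comp_def lessThan_atLeast0)
  qed
  finally have cp: "char_poly A = (\<Prod>i<n. [:- complex_of_real (d i), 1:])" .
  define R where "R = {r::real. r < 0 \<and> poly (char_poly A) (complex_of_real r) = 0}"
  have R: "R = d ` {i. i < n \<and> d i < 0}"
    unfolding R_def cp poly_prod by (auto simp: prod_zero_iff)
  have "sq_minus A = (\<Sum>r\<in>R. card {i. i < n \<and> complex_of_real (d i) = complex_of_real r})"
    unfolding sq_minus_def R_def[symmetric] unfolding cp order_prod_linear ..
  also have "\<dots> = (\<Sum>r\<in>R. card {i \<in> {i. i < n \<and> d i < 0}. d i = r})"
    by (intro sum.cong refl arg_cong[where f=card]) (auto simp: R)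
  also have "\<dots> = (\<Sum>i\<in>{i. i < n \<and> d i < 0}. 1)"
    unfolding R by (subst sum.image_gen[of _ "\<lambda>_. 1" d]) auto
  finally show ?thesis by simp
qed

definition mq :: "nat \<Rightarrow> complex mat \<Rightarrow> (nat \<Rightarrow> complex) \<Rightarrow> complex" where
  "mq n A y = (\<Sum>i<n. \<Sum>j<n. cnj (y i) * A $$ (i,j) * y j)"

lemma mq_diag:
  fixes A :: "complex mat"
  assumes U: "U \<in> carrier_mat n n" and Adec: "A = U * dmat n d * cadj U"
  shows "mq n A y = (\<Sum>k<n. complex_of_real (d k) * cnj (\<Sum>j<n. cnj (U $$ (j,k)) * y j) * (\<Sum>j<n. cnj (U $$ (j,k)) * y j))"
proof -
  have Aij: "A $$ (i,j) = (\<Sum>k<n. U $$ (i,k) * complex_of_real (d k) * cnj (U $$ (j,k)))" if "i < n" "j < n" for i j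
    unfolding Adec by (rule sandwich_entry[OF U that])
  have "mq n A y = (\<Sum>i<n. \<Sum>j<n. \<Sum>k<n. cnj (y i) * (U $$ (i,k) * complex_of_real (d k) * cnj (U $$ (j,k))) * y j)"
    unfolding mq_def by (intro sum.cong refl) (simp add: Aij sum_distrib_left sum_distrib_right)
  also have "\<dots> = (\<Sum>i<n. \<Sum>k<n. \<Sum>j<n. cnj (y i) * (U $$ (i,k) * complex_of_real (d k) * cnj (U $$ (j,k))) * y j)"
    by (intro sum.cong refl sum.swap)
  also have "\<dots> = (\<Sum>k<n. \<Sum>i<n. \<Sum>j<n. cnj (y i) * (U $$ (i,k) * complex_of_real (d k) * cnj (U $$ (j,k))) * y j)"
    by (rule sum.swap)
  also have "\<dots> = (\<Sum>k<n. complex_of_real (d k) * cnj (\<Sum>j<n. cnj (U $$ (j,k)) * y j) * (\<Sum>j<n. cnj (U $$ (j,k)) * y j))"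
    by (intro sum.cong refl) (simp add: sum_distrib_left sum_distrib_right mult_ac)
  finally show ?thesis .
qed

lemma Re_mq_diag:
  fixes A :: "complex mat"
  assumes U: "U \<in> carrier_mat n n" and Adec: "A = U * dmat n d * cadj U"
  shows "Re (mq n A y) = (\<Sum>k<n. d k * (cmod (\<Sum>j<n. cnj (U $$ (j,k)) * y j))\<^sup>2)"
proof -
  have key: "Re (complex_of_real (d k) * cnj z * z) = d k * (cmod z)\<^sup>2" for k z
  proof -
    have "cnj z * z = complex_of_real ((cmod z)\<^sup>2)" by (metis complex_norm_square mult.commute)
    then have "complex_of_real (d k) * cnj z * z = complex_of_real (d k * (cmod z)\<^sup>2)"
      by (simp only: mult.assoc of_real_mult)
    then show ?thesis by (simp only: Re_complex_of_real)
  qed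
  show ?thesis unfolding mq_diag[OF U Adec] Re_sum by (rule sum.cong[OF refl]) (rule key)
qed

lemma unitary_ortho:
  assumes U: "U \<in> carrier_mat n n" and UU: "cadj U * U = 1\<^sub>m n" and mk: "m < n" "k < n"
  shows "(\<Sum>j<n. cnj (U $$ (j,m)) * U $$ (j,k)) = (if m = k then 1 else 0)"
proof -
  have "(\<Sum>j<n. cnj (U $$ (j,m)) * U $$ (j,k)) = (\<Sum>j<n. cadj U $$ (m,j) * U $$ (j,k))"
    using U mk by (intro sum.cong) auto
  also have "\<dots> = (cadj U * U) $$ (m,k)" using prod_entry[OF cadj_carrier[OF U] U mk] by simp
  finally show ?thesis using UU mk by simp
qed

lemma herm_neg_L:
  fixes A :: "complex mat"
  assumes A: "A \<in> carrier_mat n n" and herm: "cadj A = A"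
  shows "\<exists>(I::nat set) (X::nat \<Rightarrow> nat \<Rightarrow> complex). finite I \<and> card I = sq_minus A \<and>
     (\<forall>c. (\<exists>k\<in>I. c k \<noteq> 0) \<longrightarrow> Re (mq n A (\<lambda>j. \<Sum>k\<in>I. c k * X k j)) < 0)"
proof -
  obtain U d where U: "U \<in> carrier_mat n n" and UU: "cadj U * U = 1\<^sub>m n"
    and Adec: "A = U * dmat n d * cadj U"
    using spectral[OF A herm] by blast
  define R where "R = {i. i < n \<and> d i < 0}"
  have sq: "sq_minus A = card R" unfolding R_def by (rule sq_minus_diag[OF U UU Adec])
  have fR: "finite R" unfolding R_def by simp
  define X where "X = (\<lambda>k j. U $$ (j,k))"
  have "\<forall>c. (\<exists>k\<in>R. c k \<noteq> 0) \<longrightarrow> Re (mq n A (\<lambda>j. \<Sum>k\<in>R. c k * X k j)) < 0"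
  proof (intro allI impI)
    fix c :: "nat \<Rightarrow> complex" assume "\<exists>k\<in>R. c k \<noteq> 0"
    then obtain k0 where k0: "k0 \<in> R" "c k0 \<noteq> 0" by blast
    have z: "(\<Sum>j<n. cnj (U $$ (j,m)) * (\<Sum>k\<in>R. c k * X k j)) = (if m \<in> R then c m else 0)"
      if m: "m < n" for m
    proof -
      have "(\<Sum>j<n. cnj (U $$ (j,m)) * (\<Sum>k\<in>R. c k * X k j)) = (\<Sum>j<n. \<Sum>k\<in>R. c k * (cnj (U $$ (j,m)) * U $$ (j,k)))"
        unfolding X_def sum_distrib_left by (intro sum.cong refl) (simp add: mult_ac)
      also have "\<dots> = (\<Sum>k\<in>R. c k * (\<Sum>j<n. cnj (U $$ (j,m)) * U $$ (j,k)))"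
        unfolding sum_distrib_left by (rule sum.swap)
      also have "\<dots> = (\<Sum>k\<in>R. if m = k then c k else 0)"
        using unitary_ortho[OF U UU m] by (intro sum.cong refl) (auto simp: R_def)
      also have "\<dots> = (if m \<in> R then c m else 0)" using fR by (simp add: sum.delta)
      finally show ?thesis .
    qed
    have "Re (mq n A (\<lambda>j. \<Sum>k\<in>R. c k * X k j)) = (\<Sum>m<n. d m * (cmod (\<Sum>j<n. cnj (U $$ (j,m)) * (\<Sum>k\<in>R. c k * X k j)))\<^sup>2)"
      by (rule Re_mq_diag[OF U Adec])
    also have "\<dots> = (\<Sum>m<n. if m \<in> R then d m * (cmod (c m))\<^sup>2 else 0)"
      by (intro sum.cong refl) (simp add: z)
    also have "\<dots> = (\<Sum>m\<in>R. d m * (cmod (c m))\<^sup>2)"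
      by (subst sum.inter_restrict[symmetric]) (auto simp: R_def intro!: sum.cong)
    also have "\<dots> = d k0 * (cmod (c k0))\<^sup>2 + (\<Sum>m\<in>R - {k0}. d m * (cmod (c m))\<^sup>2)"
      using fR k0(1) by (simp add: sum.remove)
    also have "\<dots> < 0"
    proof -
      have "d k0 * (cmod (c k0))\<^sup>2 < 0" using k0 by (simp add: R_def mult_neg_pos)
      moreover have "(\<Sum>m\<in>R - {k0}. d m * (cmod (c m))\<^sup>2) \<le> 0"
        by (intro sum_nonpos) (auto simp: R_def mult_nonpos_nonneg)
      ultimately show ?thesis by simp
    qed
    finally show "Re (mq n A (\<lambda>j. \<Sum>k\<in>R. c k * X k j)) < 0" .
  qed
  then show ?thesis using fR sq by (intro exI[of _ R] exI[of _ X]) auto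
qed

lemma herm_neg_U:
  fixes A :: "complex mat" and I :: "nat set" and X :: "nat \<Rightarrow> nat \<Rightarrow> complex"
  assumes A: "A \<in> carrier_mat n n" and herm: "cadj A = A" and fI: "finite I"
    and neg: "\<And>c. (\<exists>k\<in>I. c k \<noteq> 0) \<Longrightarrow> Re (mq n A (\<lambda>j. \<Sum>k\<in>I. c k * X k j)) < 0"
  shows "card I \<le> sq_minus A"
proof (rule ccontr)
  assume "\<not> card I \<le> sq_minus A"
  obtain U d where U: "U \<in> carrier_mat n n" and UU: "cadj U * U = 1\<^sub>m n"
    and Adec: "A = U * dmat n d * cadj U"
    using spectral[OF A herm] by blast
  define R where "R = {i. i < n \<and> d i < 0}"
  have sq: "sq_minus A = card R" unfolding R_def by (rule sq_minus_diag[OF U UU Adec])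
  have fR: "finite R" unfolding R_def by simp
  have lt: "card R < card I" using \<open>\<not> card I \<le> sq_minus A\<close> sq by simp
  define M where "M = (\<lambda>k r. \<Sum>j<n. cnj (U $$ (j,r)) * X k j)"
  obtain c where c: "\<exists>k\<in>I. c k \<noteq> 0" and cM: "\<forall>r\<in>R. (\<Sum>k\<in>I. c k * M k r) = 0"
    using kernel_exists[OF fR fI lt, of M] by blast
  have z: "(\<Sum>j<n. cnj (U $$ (j,m)) * (\<Sum>k\<in>I. c k * X k j)) = (\<Sum>k\<in>I. c k * M k m)" for m
  proof -
    have "(\<Sum>j<n. cnj (U $$ (j,m)) * (\<Sum>k\<in>I. c k * X k j)) = (\<Sum>j<n. \<Sum>k\<in>I. c k * (cnj (U $$ (j,m)) * X k j))"
      unfolding sum_distrib_left by (intro sum.cong refl) (simp add: mult_ac)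
    also have "\<dots> = (\<Sum>k\<in>I. c k * M k m)"
      unfolding M_def sum_distrib_left by (rule sum.swap)
    finally show ?thesis .
  qed
  have "Re (mq n A (\<lambda>j. \<Sum>k\<in>I. c k * X k j)) = (\<Sum>m<n. d m * (cmod (\<Sum>j<n. cnj (U $$ (j,m)) * (\<Sum>k\<in>I. c k * X k j)))\<^sup>2)"
    by (rule Re_mq_diag[OF U Adec])
  also have "\<dots> \<ge> 0"
  proof (intro sum_nonneg)
    fix m assume m: "m \<in> {..<n}"
    show "0 \<le> d m * (cmod (\<Sum>j<n. cnj (U $$ (j,m)) * (\<Sum>k\<in>I. c k * X k j)))\<^sup>2"
    proof (cases "d m < 0")
      case True
      then have "m \<in> R" using m by (simp add: R_def)
      then show ?thesis unfolding z using cM by simp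
    next
      case False
      then show ?thesis by simp
    qed
  qed
  finally show False using neg[OF c] by simp
qed

lemma herm_sq_le:
  fixes A :: "complex mat"
  assumes A: "A \<in> carrier_mat n n" and herm: "cadj A = A"
  shows "sq_minus A \<le> n"
proof -
  obtain U d where U: "U \<in> carrier_mat n n" and UU: "cadj U * U = 1\<^sub>m n"
    and Adec: "A = U * dmat n d * cadj U"
    using spectral[OF A herm] by blast
  have "sq_minus A = card {i. i < n \<and> d i < 0}" by (rule sq_minus_diag[OF U UU Adec])
  also have "\<dots> \<le> card {..<n}" by (intro card_mono) auto
  finally show ?thesis by simp
qed

lemma pick_carrier: "pick_matrix h zs \<in> carrier_mat (length zs) (length zs)"
  unfolding pick_matrix_def by simp

lemma pick_index: "i < length zs \<Longrightarrow> j < length zs \<Longrightarrow> pick_matrix h zs $$ (i,j) = Kf h (zs!i) (zs!j)"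
  unfolding pick_matrix_def Kf_def by simp

lemma pick_herm: "cadj (pick_matrix h zs) = pick_matrix h zs"
proof (rule eq_matI)
  fix i j assume "i < dim_row (pick_matrix h zs)" "j < dim_col (pick_matrix h zs)"
  then have ij: "i < length zs" "j < length zs" using pick_carrier[of h zs] by auto
  have "cnj (Kf h (zs!j) (zs!i)) = Kf h (zs!i) (zs!j)"
    unfolding Kf_def by (simp add: mult.commute)
  then show "cadj (pick_matrix h zs) $$ (i,j) = pick_matrix h zs $$ (i,j)"
    using ij pick_carrier[of h zs] by (simp add: pick_index)
qed (use pick_carrier[of h zs] in auto)

lemma sum_set_nth:
  assumes "distinct zs"
  shows "(\<Sum>z\<in>set zs. g z) = (\<Sum>i<length zs. g (zs!i))"
  using sum.reindex_bij_betw[OF bij_betw_nth[OF assms refl refl], of g] by simp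

lemma qf_pick:
  assumes "distinct zs"
  shows "qf h (set zs) y = mq (length zs) (pick_matrix h zs) (\<lambda>i. y (zs!i))"
proof -
  have "qf h (set zs) y = (\<Sum>i<length zs. \<Sum>w\<in>set zs. cnj (y (zs!i)) * Kf h (zs!i) w * y w)"
    unfolding qf_def by (rule sum_set_nth[OF assms])
  also have "\<dots> = (\<Sum>i<length zs. \<Sum>j<length zs. cnj (y (zs!i)) * Kf h (zs!i) (zs!j) * y (zs!j))"
    by (intro sum.cong refl sum_set_nth[OF assms])
  also have "\<dots> = mq (length zs) (pick_matrix h zs) (\<lambda>i. y (zs!i))"
    unfolding mq_def by (intro sum.cong refl) (simp add: pick_index)
  finally show ?thesis .
qed

lemma negp_pick_L:
  assumes "distinct zs"
  shows "negp h (set zs) (sq_minus (pick_matrix h zs))"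
proof -
  let ?n = "length zs"
  obtain I :: "nat set" and X :: "nat \<Rightarrow> nat \<Rightarrow> complex" where I: "finite I" "card I = sq_minus (pick_matrix h zs)"
    and neg: "\<forall>c. (\<exists>k\<in>I. c k \<noteq> 0) \<longrightarrow> Re (mq ?n (pick_matrix h zs) (\<lambda>j. \<Sum>k\<in>I. c k * X k j)) < 0"
    using herm_neg_L[OF pick_carrier pick_herm] by blast
  define X' where "X' = (\<lambda>k z. X k (inv_into {..<?n} ((!) zs) z))"
  have inv: "inv_into {..<?n} ((!) zs) (zs!i) = i" if "i < ?n" for i
    using inv_into_f_f[OF inj_on_nth[OF assms, of "{..<?n}"]] that by auto
  show ?thesis
  proof (rule negpI[where I=I and X=X'])
    fix c :: "nat \<Rightarrow> complex" assume c: "\<exists>k\<in>I. c k \<noteq> 0"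
    have "qf h (set zs) (\<lambda>z. \<Sum>k\<in>I. c k * X' k z) = mq ?n (pick_matrix h zs) (\<lambda>i. \<Sum>k\<in>I. c k * X' k (zs!i))"
      by (rule qf_pick[OF assms])
    also have "\<dots> = mq ?n (pick_matrix h zs) (\<lambda>j. \<Sum>k\<in>I. c k * X k j)"
      unfolding mq_def by (intro sum.cong refl) (simp add: X'_def inv)
    finally show "Re (qf h (set zs) (\<lambda>z. \<Sum>k\<in>I. c k * X' k z)) < 0" using neg c by simp
  qed (use I in auto)
qed

lemma negp_pick_U:
  assumes "distinct zs" "negp h (set zs) p"
  shows "p \<le> sq_minus (pick_matrix h zs)"
proof -
  let ?n = "length zs"
  obtain I :: "nat set" and X :: "nat \<Rightarrow> complex \<Rightarrow> complex" where I: "finite I" "card I = p"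
    and neg: "\<And>c. (\<exists>k\<in>I. c k \<noteq> 0) \<Longrightarrow> Re (qf h (set zs) (\<lambda>z. \<Sum>k\<in>I. c k * X k z)) < 0"
    using assms(2) by (rule negpE) blast
  define X' where "X' = (\<lambda>k i. X k (zs!i))"
  have "card I \<le> sq_minus (pick_matrix h zs)"
  proof (rule herm_neg_U[OF pick_carrier pick_herm I(1), where X=X'])
    fix c :: "nat \<Rightarrow> complex" assume c: "\<exists>k\<in>I. c k \<noteq> 0"
    have "qf h (set zs) (\<lambda>z. \<Sum>k\<in>I. c k * X k z) = mq ?n (pick_matrix h zs) (\<lambda>j. \<Sum>k\<in>I. c k * X' k j)"
      unfolding qf_pick[OF assms(1)] X'_def ..
    then show "Re (mq ?n (pick_matrix h zs) (\<lambda>j. \<Sum>k\<in>I. c k * X' k j)) < 0" using neg[OF c] by simp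
  qed
  then show ?thesis using I by simp
qed

abbreviation sqp :: "(complex \<Rightarrow> complex) \<Rightarrow> complex list \<Rightarrow> nat" where
  "sqp h zs \<equiv> sq_minus (pick_matrix h zs)"

lemma sqp_mono:
  assumes "distinct xs" "distinct ys" "set xs \<subseteq> set ys"
  shows "sqp h xs \<le> sqp h ys"
proof -
  have "negp h (set ys) (sqp h xs)"
    by (rule negp_mono[OF _ assms(3) negp_pick_L[OF assms(1)]]) simp
  then show ?thesis by (rule negp_pick_U[OF assms(2)])
qed

lemma sqp_drop:
  assumes "distinct xs" "distinct ys" "set xs \<subseteq> set ys"
  shows "sqp h ys \<le> sqp h xs + card (set ys - set xs)"
proof -
  have "negp h (set xs) (sqp h ys - card (set ys - set xs))"
    by (rule negp_drop_set[OF _ assms(3) negp_pick_L[OF assms(2)]]) simp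
  then have "sqp h ys - card (set ys - set xs) \<le> sqp h xs" by (rule negp_pick_U[OF assms(1)])
  then show ?thesis by simp
qed

lemma sqp_cong:
  assumes "\<And>z. z \<in> set xs \<Longrightarrow> h z = h' z"
  shows "sqp h xs = sqp h' xs"
proof -
  have "pick_matrix h xs = pick_matrix h' xs"
  proof (rule eq_matI)
    fix i j assume "i < dim_row (pick_matrix h' xs)" "j < dim_col (pick_matrix h' xs)"
    then have ij: "i < length xs" "j < length xs" using pick_carrier[of h' xs] by auto
    then show "pick_matrix h xs $$ (i,j) = pick_matrix h' xs $$ (i,j)"
      using assms[of "xs!i"] assms[of "xs!j"] by (simp add: pick_index Kf_def)
  qed (use pick_carrier[of h xs] pick_carrier[of h' xs] in auto)
  then show ?thesis by simp
qed

lemma sqp_le_length: "sqp h xs \<le> length xs"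
  by (rule herm_sq_le[OF pick_carrier pick_herm])

lemma kappa_set_finite:
  "finite {sqp h zs | zs. length zs = n \<and> distinct zs \<and> set zs \<subseteq> D}"
  by (rule finite_subset[of _ "{..n}"]) (auto intro: order.trans[OF sqp_le_length])

lemma kappa_ge:
  assumes "length zs = n" "distinct zs" "set zs \<subseteq> D"
  shows "sqp h zs \<le> kappa D h n"
  unfolding kappa_def
  by (rule cSup_upper) (use assms kappa_set_finite[of h n D] in \<open>auto intro: bdd_above_finite\<close>)

lemma kappa_le:
  assumes "\<And>zs. length zs = n \<Longrightarrow> distinct zs \<Longrightarrow> set zs \<subseteq> D \<Longrightarrow> sqp h zs \<le> B"
  shows "kappa D h n \<le> B"
proof (cases "{sqp h zs | zs. length zs = n \<and> distinct zs \<and> set zs \<subseteq> D} = {}")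
  case True
  show ?thesis unfolding kappa_def True by simp
next
  case False
  then show ?thesis unfolding kappa_def by (rule cSup_least) (use assms in auto)
qed

lemma extend_list:
  assumes "infinite D" "finite S"
  shows "\<exists>ys. length ys = r \<and> distinct ys \<and> set ys \<subseteq> D - S"
proof -
  have "infinite (D - S)" using assms by (rule Diff_infinite_finite[rotated])
  then obtain B where B: "finite B" "card B = r" "B \<subseteq> D - S"
    using infinite_arbitrarily_large by blast
  obtain ys where ys: "set ys = B" "distinct ys" using finite_distinct_list[OF B(1)] by blast
  then show ?thesis using B distinct_card[OF ys(2)] by auto
qed

lemma kappa_mono_n:
  assumes "infinite D" "m \<le> n"
  shows "kappa D h m \<le> kappa D h n"
proof (rule kappa_le)
  fix xs assume xs: "length xs = m" "distinct xs" "set xs \<subseteq> D"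
  obtain ys where ys: "length ys = n - m" "distinct ys" "set ys \<subseteq> D - set xs"
    using extend_list[OF assms(1), of "set xs" "n - m"] by auto
  have "sqp h xs \<le> sqp h (xs @ ys)"
    by (rule sqp_mono) (use xs ys in auto)
  also have "\<dots> \<le> kappa D h n"
    by (rule kappa_ge) (use xs ys assms in auto)
  finally show "sqp h xs \<le> kappa D h n" .
qed

lemma D0_infinite:
  assumes "disk_discrete L"
  shows "infinite (ball (0::complex) 1 - L)"
proof -
  have "countable L" using assms unfolding disk_discrete_def by simp
  then have "uncountable (ball (0::complex) 1 - L)"
    by (intro uncountable_minus_countable uncountable_ball) auto
  then show ?thesis using countable_finite by blast
qed

theorem lemma2p3:
  fixes L :: "complex set" and f :: "complex \<Rightarrow> complex"
  assumes "disk_discrete L"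
  shows "(\<forall>(ws :: complex list) (g :: complex \<Rightarrow> complex) (n :: nat).
            set ws \<subseteq> ball 0 1 \<and> (\<forall>z\<in>ball 0 1 - L. g z = f z) \<and> n \<ge> 1 \<longrightarrow>
              kappa (ball 0 1 - L) f n \<le> kappa ((ball 0 1 - L) \<union> set ws) g n
            \<and> kappa ((ball 0 1 - L) \<union> set ws) g n
                \<le> Max ((\<lambda>r. kappa (ball 0 1 - L) f (n - r) + r) ` {0..min (length ws) n})
            \<and> Max ((\<lambda>r. kappa (ball 0 1 - L) f (n - r) + r) ` {0..min (length ws) n})
                \<le> kappa (ball 0 1 - L) f n + length ws)
       \<and> (\<forall>(zs :: complex list) (g :: complex \<Rightarrow> complex) (n :: nat).
            distinct zs \<and> set zs \<subseteq> ball 0 1 - L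
            \<and> (\<forall>z\<in>ball 0 1 - L - set zs. g z = f z) \<and> n \<ge> 1 \<longrightarrow>
              kappa (ball 0 1 - L) g n \<le> kappa (ball 0 1 - L) f n + length zs)"
proof -
  define D where "D = ball (0::complex) 1 - L"
  have Dinf: "infinite D" unfolding D_def by (rule D0_infinite[OF assms])
  have part1: "kappa D f n \<le> kappa (D \<union> set ws) g n
            \<and> kappa (D \<union> set ws) g n \<le> Max ((\<lambda>r. kappa D f (n - r) + r) ` {0..min (length ws) n})
            \<and> Max ((\<lambda>r. kappa D f (n - r) + r) ` {0..min (length ws) n}) \<le> kappa D f n + length ws"
    if gf: "\<forall>z\<in>D. g z = f z" for ws g n
  proof (intro conjI)
    show "kappa D f n \<le> kappa (D \<union> set ws) g n"
    proof (rule kappa_le)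
      fix zs assume zs: "length zs = n" "distinct zs" "set zs \<subseteq> D"
      have "sqp f zs = sqp g zs" by (rule sqp_cong) (use gf zs in auto)
      also have "\<dots> \<le> kappa (D \<union> set ws) g n" by (rule kappa_ge) (use zs in auto)
      finally show "sqp f zs \<le> kappa (D \<union> set ws) g n" .
    qed
    let ?F = "(\<lambda>r. kappa D f (n - r) + r) ` {0..min (length ws) n}"
    have fF: "finite ?F" by simp
    show "kappa (D \<union> set ws) g n \<le> Max ?F"
    proof (rule kappa_le)
      fix zs assume zs: "length zs = n" "distinct zs" "set zs \<subseteq> D \<union> set ws"
      define xs where "xs = filter (\<lambda>z. z \<in> D) zs"
      define r where "r = card (set zs - set xs)"
      have xsd: "distinct xs" using zs by (simp add: xs_def)
      have sxs: "set xs \<subseteq> set zs" "set xs \<subseteq> D" by (auto simp: xs_def)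
      have "set zs - set xs \<subseteq> set ws" using zs by (auto simp: xs_def)
      then have "r \<le> card (set ws)" unfolding r_def by (intro card_mono) auto
      also have "\<dots> \<le> length ws" by (rule card_length)
      finally have rws: "r \<le> length ws" .
      have cz: "card (set zs) = n" using distinct_card[OF zs(2)] zs(1) by simp
      have "card (set zs) = card (set xs) + r"
        unfolding r_def using sxs(1) by (metis card_Diff_subset finite_set card_mono le_add_diff_inverse)
      then have lxs: "length xs = n - r" and rn: "r \<le> n" using cz distinct_card[OF xsd] by auto
      have "sqp g zs \<le> sqp g xs + r" unfolding r_def by (rule sqp_drop[OF xsd zs(2) sxs(1)])
      also have "sqp g xs = sqp f xs" by (rule sqp_cong) (use gf sxs in auto)
      also have "sqp f xs \<le> kappa D f (n - r)" by (rule kappa_ge[OF lxs xsd sxs(2)])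
      also have "kappa D f (n - r) + r \<le> Max ?F"
        by (rule Max_ge[OF fF]) (use rws rn in auto)
      finally show "sqp g zs \<le> Max ?F" by simp
    qed
    show "Max ?F \<le> kappa D f n + length ws"
    proof (rule Max.boundedI[OF fF])
      show "?F \<noteq> {}" by simp
    next
      fix a assume "a \<in> ?F"
      then obtain r where r: "r \<le> min (length ws) n" "a = kappa D f (n - r) + r" by auto
      have "kappa D f (n - r) \<le> kappa D f n" by (rule kappa_mono_n[OF Dinf]) simp
      then show "a \<le> kappa D f n + length ws" using r by simp
    qed
  qed
  have part2: "kappa D g n \<le> kappa D f n + length zs"
    if zs: "distinct zs" "set zs \<subseteq> D" and gf: "\<forall>z\<in>D - set zs. g z = f z" for zs g n
  proof (rule kappa_le)
    fix xs assume xs: "length xs = n" "distinct xs" "set xs \<subseteq> D"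
    define ts where "ts = filter (\<lambda>z. z \<notin> set zs) xs"
    have tsd: "distinct ts" using xs by (simp add: ts_def)
    have sts: "set ts \<subseteq> set xs" "set ts \<subseteq> D - set zs" using xs by (auto simp: ts_def)
    have "set xs - set ts \<subseteq> set zs" by (auto simp: ts_def)
    then have "card (set xs - set ts) \<le> card (set zs)" by (intro card_mono) auto
    also have "\<dots> = length zs" by (rule distinct_card[OF zs(1)])
    finally have cle: "card (set xs - set ts) \<le> length zs" .
    have "sqp g xs \<le> sqp g ts + card (set xs - set ts)" by (rule sqp_drop[OF tsd xs(2) sts(1)])
    also have "sqp g ts = sqp f ts" by (rule sqp_cong) (use gf sts in auto)
    also have "sqp f ts \<le> sqp f xs" by (rule sqp_mono[OF tsd xs(2) sts(1)])
    also have "sqp f xs \<le> kappa D f n" by (rule kappa_ge[OF xs])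
    finally show "sqp g xs \<le> kappa D f n + length zs" using cle by simp
  qed
  show ?thesis
    unfolding D_def[symmetric]
    using part1 part2 by blast
qed

end
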